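(* $\Sigma^*\setminus L_{\mathrm{UNIQ}}\subseteq\bigcup_{x\in\Sigma}\bigcup_{a,b\in\Sigma\setminus\{x\}}K_{x,a,b}$; that is, every string $w\in\Sigma^*$ that is not uniquely decodable from its bigram counts belongs to $L_{\mathrm{OBST}}$.
   Context: Let $\Sigma$ be a finite alphabet and $\$\notin\Sigma$ a delimiter symbol; $\Sigma_\$=\Sigma\cup\{\$\}$. The bigram map $\Phi$ sends a string $z\in\$\Sigma^*\$$ to the vector $\Phi(z)\in\mathbb{N}^{\Sigma_\$^2}$ whose $(i,j)$ entry is the number of positions at which the two-letter string $ij$ occurs as a contiguous factor of $z$ (counting overlaps). $L_{\mathrm{UNIQ}}$ is the set of $w\in\Sigma^*$ such that the only $z\in\$\Sigma^*\$$ with $\Phi(z)=\Phi(\$w\$)$ is $z=\$w\$$. For $x\in\Sigma$ write $\Sigma_{\neg x}=\Sigma\setminus\{x\}$. For $x\in\Sigma$ and $a,b\in\Sigma_{\neg x}$ (with $a=b$ allowed) define $I_{x,a,b}=\Sigma^*\,a\,x\,\Sigma_{\neg a}^*\,b\,\Sigma^*$, $J_{x,a,b}=\Sigma^*\,a\,\Sigma_{\neg x}^*\,b\,\Sigma^*$ (regular-expression notation), $K_{x,a,b}=I_{x,a,b}\cap J_{x,a,b}$, and $L_{\mathrm{OBST}}=\bigcup_{x\in\Sigma}\bigcup_{a,b\in\Sigma_{\neg x}}K_{x,a,b}$. *)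

theory Defs
  imports Main
begin

text \<open>The alphabet Sigma is the finite type 'a. The extended alphabet Sigma_$ is 'a option,
  with None playing the role of the delimiter $ and Some c the letter c.\<close>

definition delim :: "'a list \<Rightarrow> 'a option list" where
  "delim w = None # map Some w @ [None]"

definition bigram :: "'b list \<Rightarrow> 'b \<Rightarrow> 'b \<Rightarrow> nat" where
  "bigram z i j = card {k. Suc k < length z \<and> z ! k = i \<and> z ! Suc k = j}"

definition L_UNIQ :: "('a::finite) list set" where
  "L_UNIQ = {w. \<forall>u. bigram (delim u) = bigram (delim w) \<longrightarrow> delim u = delim w}"

definition I_lang :: "'a \<Rightarrow> 'a \<Rightarrow> 'a \<Rightarrow> ('a::finite) list set" where
  "I_lang x a b = {w. \<exists>p v s. w = p @ [a, x] @ v @ [b] @ s \<and> a \<notin> set v}"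

definition J_lang :: "'a \<Rightarrow> 'a \<Rightarrow> 'a \<Rightarrow> ('a::finite) list set" where
  "J_lang x a b = {w. \<exists>p v s. w = p @ [a] @ v @ [b] @ s \<and> x \<notin> set v}"

definition K_lang :: "'a \<Rightarrow> 'a \<Rightarrow> 'a \<Rightarrow> ('a::finite) list set" where
  "K_lang x a b = I_lang x a b \<inter> J_lang x a b"

definition L_OBST :: "('a::finite) list set" where
  "L_OBST = (\<Union>x. \<Union>a\<in>UNIV - {x}. \<Union>b\<in>UNIV - {x}. K_lang x a b)"

end

theory Submission
  imports Defs
begin

lemma I_pos:
  assumes "Suc i < j" "j < length w" "w!i = a" "w!Suc i = x" "w!j = b"
    "\<forall>t. Suc i < t \<and> t < j \<longrightarrow> w!t \<noteq> a"
  shows "w \<in> I_lang x a b"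
proof -
  let ?v = "take (j - Suc (Suc i)) (drop (Suc (Suc i)) w)"
  have d1: "drop i w = a # x # drop (Suc (Suc i)) w"
    using Cons_nth_drop_Suc[of i w] Cons_nth_drop_Suc[of "Suc i" w] assms by simp
  have jj: "j - Suc (Suc i) + Suc (Suc i) = j" using assms by linarith
  have e: "drop (j - Suc (Suc i)) (drop (Suc (Suc i)) w) = drop j w" by (simp only: drop_drop jj)
  have d2: "drop (Suc (Suc i)) w = ?v @ drop j w"
    by (subst e[symmetric]) (rule append_take_drop_id[symmetric])
  have d3: "drop j w = b # drop (Suc j) w" using Cons_nth_drop_Suc[of j w] assms by simp
  have w: "w = take i w @ [a, x] @ ?v @ [b] @ drop (Suc j) w"
    using d1 d2 d3 append_take_drop_id[of i w] by simp
  have "a \<notin> set ?v"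
  proof
    assume "a \<in> set ?v"
    then obtain t where t: "t < length ?v" "?v ! t = a" by (auto simp: in_set_conv_nth)
    have "?v ! t = w ! (Suc (Suc i) + t)" using t assms by auto
    moreover have "Suc i < Suc (Suc i) + t" "Suc (Suc i) + t < j" using t assms by auto
    ultimately have "w ! (Suc (Suc i) + t) \<noteq> a" using assms(6) by blast
    then show False using t \<open>?v ! t = w ! (Suc (Suc i) + t)\<close> by simp
  qed
  then show ?thesis unfolding I_lang_def using w by blast
qed

lemma J_pos:
  assumes "i < j" "j < length w" "w!i = a" "w!j = b"
    "\<forall>t. i < t \<and> t < j \<longrightarrow> w!t \<noteq> x"
  shows "w \<in> J_lang x a b"
proof -
  let ?v = "take (j - Suc i) (drop (Suc i) w)"
  have d1: "drop i w = a # drop (Suc i) w"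
    using Cons_nth_drop_Suc[of i w] assms by simp
  have jj: "j - Suc i + Suc i = j" using assms by linarith
  have e: "drop (j - Suc i) (drop (Suc i) w) = drop j w" by (simp only: drop_drop jj)
  have d2: "drop (Suc i) w = ?v @ drop j w"
    by (subst e[symmetric]) (rule append_take_drop_id[symmetric])
  have d3: "drop j w = b # drop (Suc j) w" using Cons_nth_drop_Suc[of j w] assms by simp
  have w: "w = take i w @ [a] @ ?v @ [b] @ drop (Suc j) w"
    using d1 d2 d3 append_take_drop_id[of i w] by simp
  have "x \<notin> set ?v"
  proof
    assume "x \<in> set ?v"
    then obtain t where t: "t < length ?v" "?v ! t = x" by (auto simp: in_set_conv_nth)
    have "?v ! t = w ! (Suc i + t)" using t assms by auto
    moreover have "i < Suc i + t" "Suc i + t < j" using t assms by auto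
    ultimately have "w ! (Suc i + t) \<noteq> x" using assms(5) by blast
    then show False using t \<open>?v ! t = w ! (Suc i + t)\<close> by simp
  qed
  then show ?thesis unfolding J_lang_def using w by blast
qed

lemma I_pre: "ws \<in> I_lang x a b \<Longrightarrow> pre @ ws \<in> I_lang x a b"
  unfolding I_lang_def by (auto, metis append.assoc)

lemma J_pre: "ws \<in> J_lang x a b \<Longrightarrow> pre @ ws \<in> J_lang x a b"
  unfolding J_lang_def by (auto, metis append.assoc)

lemma bigram_pos: "bigram z i j > 0 \<longleftrightarrow> (\<exists>k. Suc k < length z \<and> z!k = i \<and> z!Suc k = j)"
proof -
  have "finite {k. Suc k < length z \<and> z!k = i \<and> z!Suc k = j}"
    by (rule finite_subset[of _ "{..<length z}"]) auto
  then show ?thesis unfolding bigram_def by (auto simp: card_gt_0_iff)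
qed

lemma last_before: "P (0::nat) \<Longrightarrow> \<exists>q\<le>t. P q \<and> (\<forall>r. q<r \<and> r\<le>t \<longrightarrow> \<not> P r)"
proof (induction t)
  case 0 then show ?case by auto
next
  case (Suc t)
  then obtain q where q: "q \<le> t" "P q" "\<forall>r. q<r \<and> r\<le>t \<longrightarrow> \<not> P r" by auto
  show ?case
  proof (cases "P (Suc t)")
    case True then show ?thesis by (intro exI[of _ "Suc t"]) auto
  next
    case False then show ?thesis using q by (intro exI[of _ q]) (auto simp: le_Suc_eq)
  qed
qed

lemma bigram_split:
  assumes "k \<le> length z"
  shows "bigram z i j = card {p. p < k \<and> Suc p < length z \<and> z!p = i \<and> z!Suc p = j}
     + bigram (drop k z) i j"
proof -
  let ?A = "{p. p < k \<and> Suc p < length z \<and> z!p = i \<and> z!Suc p = j}"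
  let ?B = "{p. k \<le> p \<and> Suc p < length z \<and> z!p = i \<and> z!Suc p = j}"
  let ?C = "{p. Suc p < length (drop k z) \<and> drop k z!p = i \<and> drop k z!Suc p = j}"
  have un: "{p. Suc p < length z \<and> z!p = i \<and> z!Suc p = j} = ?A \<union> ?B" by auto
  have fA: "finite ?A" by (rule finite_subset[of _ "{..<k}"]) auto
  have fB: "finite ?B" by (rule finite_subset[of _ "{..<length z}"]) auto
  have img: "?B = (\<lambda>p. p + k) ` ?C"
  proof
    show "?B \<subseteq> (\<lambda>p. p + k) ` ?C"
    proof
      fix p assume p: "p \<in> ?B"
      then have "p - k \<in> ?C" "p = (p - k) + k" using assms by (auto simp: Suc_diff_le)
      then show "p \<in> (\<lambda>p. p + k) ` ?C" by blast
    qed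
    show "(\<lambda>p. p + k) ` ?C \<subseteq> ?B" using assms by (auto simp: add.commute)
  qed
  have cB: "card ?B = card ?C" unfolding img by (rule card_image) (auto simp: inj_on_def)
  have "card (?A \<union> ?B) = card ?A + card ?B" by (rule card_Un_disjoint[OF fA fB]) auto
  then show ?thesis unfolding bigram_def un cB .
qed


lemma core:
  fixes ws :: "('a::finite) list" and R' :: "'a option list"
  defines "R \<equiv> map Some ws @ [None]"
  assumes ne: "ws \<noteq> []" and bg: "bigram R' = bigram R" and lR': "2 \<le> length R'"
    and h0: "R'!0 = Some (ws!0)" and h1: "R'!1 \<noteq> R!1"
  shows "\<exists>x a b. a \<noteq> x \<and> b \<noteq> x \<and> ws \<in> I_lang x a b \<and> ws \<in> J_lang x a b"
proof -
  define N where "N = length ws"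
  define c where "c = ws!0"
  have lR: "length R = Suc N" unfolding R_def N_def by simp
  have RS: "\<And>i. i < N \<Longrightarrow> R!i = Some (ws!i)" unfolding R_def N_def by (simp add: nth_append)
  have RN: "R!N = None" unfolding R_def N_def by (simp add: nth_append)
  have N0: "0 < N" using ne unfolding N_def by simp
  have "bigram R' (Some c) (R'!1) > 0" unfolding bigram_pos using lR' h0 c_def
    by (intro exI[of _ 0]) auto
  then have "bigram R (Some c) (R'!1) > 0" using bg by simp
  then obtain p where p: "Suc p < Suc N" "R!p = Some c" "R!Suc p = R'!1"
    unfolding bigram_pos lR by auto
  have pN: "p < N" using p by simp
  have wp: "ws!p = c" using p RS[OF pN] by simp
  have p0: "p \<noteq> 0"
  proof
    assume "p = 0" then show False using p(3) h1 by simp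
  qed
  have N2: "1 < N" using p0 pN by simp
  define dd where "dd = ws!1"
  have R1: "R!1 = Some dd" using RS[OF N2] dd_def by simp
  define Pm where "Pm = (\<lambda>m. m < N \<and> ws!m = c \<and> R!Suc m \<noteq> Some dd)"
  have Pp: "Pm p" unfolding Pm_def using pN wp p h1 R1 by auto
  define m where "m = (LEAST m. Pm m)"
  have Pmm: "Pm m" unfolding m_def by (rule LeastI[of Pm p, OF Pp])
  then have mN: "m < N" and wm: "ws!m = c" and Rm: "R!Suc m \<noteq> Some dd" unfolding Pm_def by auto
  have m0: "m \<noteq> 0"
  proof
    assume "m = 0" then show False using Rm R1 by simp
  qed
  have before: "\<And>q. q < m \<Longrightarrow> ws!q = c \<Longrightarrow> Suc q < N \<and> ws!Suc q = dd"
  proof -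
    fix q assume q: "q < m" "ws!q = c"
    have "\<not> Pm q" using q(1) unfolding m_def by (rule not_less_Least)
    then have "R!Suc q = Some dd" using q mN unfolding Pm_def by auto
    moreover have "Suc q \<noteq> N" using RN calculation by auto
    ultimately show "Suc q < N \<and> ws!Suc q = dd" using q mN RS[of "Suc q"] by auto
  qed
  define Bef where "Bef = (\<lambda>t. ws!t) ` {..m}"
  have cBef: "c \<in> Bef" unfolding Bef_def using wm by auto
  have dBef: "dd \<in> Bef" unfolding Bef_def dd_def using m0 by auto
  define PS where "PS = (\<lambda>j. m < j \<and> j < N \<and> (\<forall>t. m < t \<and> t < j \<longrightarrow> ws!t \<noteq> c) \<and> ws!j \<in> Bef)"
  show ?thesis
  proof (cases "\<exists>j. PS j")
    case True
    then obtain j0 where "PS j0" by auto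
    define j where "j = (LEAST j. PS j)"
    have PSj: "PS j" unfolding j_def by (rule LeastI[of PS j0, OF \<open>PS j0\<close>])
    then have mj: "m < j" and jN: "j < N" and cfree: "\<forall>t. m < t \<and> t < j \<longrightarrow> ws!t \<noteq> c"
      and jB: "ws!j \<in> Bef" unfolding PS_def by auto
    have notB: "\<forall>t. m < t \<and> t < j \<longrightarrow> ws!t \<notin> Bef"
    proof (intro allI impI)
      fix t assume t: "m < t \<and> t < j"
      have "\<not> PS t" using t unfolding j_def by (intro not_less_Least) auto
      then show "ws!t \<notin> Bef" using t jN cfree unfolding PS_def by auto
    qed
    have notd: "\<forall>t. m < t \<and> t < j \<longrightarrow> ws!t \<noteq> dd" using notB dBef by auto
    define b where "b = ws!j"
    show ?thesis
    proof (cases "b = c")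
      case bc: True
      show ?thesis
      proof (cases "dd = c")
        case False
        define Pq where "Pq = (\<lambda>q. 0 < q \<and> q < N \<and> ws!q = c)"
        have "Pq m" unfolding Pq_def using m0 mN wm by auto
        define q where "q = (LEAST q. Pq q)"
        have Pqq: "Pq q" unfolding q_def by (rule LeastI[of Pq m, OF \<open>Pq m\<close>])
        have q1: "q \<noteq> 1" using Pqq False dd_def unfolding Pq_def by auto
        have qfree: "\<forall>t. Suc 0 < t \<and> t < q \<longrightarrow> ws!t \<noteq> c"
        proof (intro allI impI)
          fix t assume t: "Suc 0 < t \<and> t < q"
          have "\<not> Pq t" using t unfolding q_def by (intro not_less_Least) auto
          then show "ws!t \<noteq> c" using t Pqq unfolding Pq_def by auto
        qed
        have I: "ws \<in> I_lang dd c c"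
          by (rule I_pos[of 0 q]) (use Pqq q1 qfree c_def dd_def in \<open>auto simp: Pq_def N_def\<close>)
        have J: "ws \<in> J_lang dd c c"
          by (rule J_pos[of m j]) (use mj jN wm bc b_def notd in \<open>auto simp: N_def\<close>)
        show ?thesis using I J False by (intro exI[of _ dd] exI[of _ c] exI[of _ c]) auto
      next
        case True
        have "Suc m < N" using mj jN by simp
        have "j \<noteq> Suc m"
        proof
          assume "j = Suc m"
          then have "R!Suc m = Some c" using RS[OF jN] bc b_def by simp
          then show False using Rm True by simp
        qed
        then have mj2: "Suc m < j" using mj by simp
        define x where "x = ws!Suc m"
        have xc: "x \<noteq> c" using cfree mj2 x_def by auto
        have I: "ws \<in> I_lang x c c"
          by (rule I_pos[of m j]) (use mj2 jN wm x_def bc b_def cfree in \<open>auto simp: N_def\<close>)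
        have J: "ws \<in> J_lang x c c"
          by (rule J_pos[of 0 1]) (use N2 True c_def dd_def in \<open>auto simp: N_def\<close>)
        show ?thesis using I J xc by (intro exI[of _ x] exI[of _ c] exI[of _ c]) auto
      qed
    next
      case bnc: False
      show ?thesis
      proof (cases "b = dd")
        case True
        have "j \<noteq> Suc m"
        proof
          assume "j = Suc m"
          then have "R!Suc m = Some dd" using RS[OF jN] True b_def by simp
          then show False using Rm by simp
        qed
        then have mj2: "Suc m < j" using mj by simp
        define x where "x = ws!Suc m"
        have xc: "x \<noteq> c" using cfree mj2 x_def by auto
        have xd: "x \<noteq> dd" using Rm RS[of "Suc m"] mj2 jN x_def by auto
        have I: "ws \<in> I_lang x c dd"
          by (rule I_pos[of m j]) (use mj2 jN wm x_def True b_def cfree in \<open>auto simp: N_def\<close>)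
        have J: "ws \<in> J_lang x c dd"
          by (rule J_pos[of 0 1]) (use N2 c_def dd_def in \<open>auto simp: N_def\<close>)
        show ?thesis using I J xc xd by (intro exI[of _ x] exI[of _ c] exI[of _ dd]) auto
      next
        case bnd: False
        obtain t where t: "t \<le> m" "ws!t = b" using jB b_def unfolding Bef_def by auto
        obtain q where q: "q \<le> t" "ws!q = c" "\<forall>r. q<r \<and> r\<le>t \<longrightarrow> ws!r \<noteq> c"
          using last_before[of "\<lambda>q. ws!q = c" t] c_def by auto
        have qt: "q \<noteq> t" using q t bnc by auto
        have tm: "t \<noteq> m" using t wm bnc by auto
        have qm: "q < m" using q qt tm t by simp
        from before[OF qm q(2)] have sq: "Suc q < N" "ws!Suc q = dd" by auto
        have "Suc q \<noteq> t" using sq t bnd by auto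
        then have qt2: "Suc q < t" using q qt by simp
        have dc: "dd \<noteq> c" using q(3) qt2 sq by auto
        have I: "ws \<in> I_lang dd c b"
          by (rule I_pos[of q t]) (use qt2 t tm mN q sq in \<open>auto simp: N_def\<close>)
        have J: "ws \<in> J_lang dd c b"
          by (rule J_pos[of m j]) (use mj jN wm b_def notd in \<open>auto simp: N_def\<close>)
        show ?thesis using I J dc bnd by (intro exI[of _ dd] exI[of _ c] exI[of _ b]) auto
      qed
    qed
  next
    case False
    have noc: "\<forall>j. m < j \<and> j < N \<longrightarrow> ws!j \<noteq> c"
    proof (rule ccontr)
      assume "\<not> ?thesis"
      then obtain j0 where j0: "m < j0 \<and> j0 < N \<and> ws!j0 = c" by auto
      define Q where "Q = (\<lambda>j. m < j \<and> j < N \<and> ws!j = c)"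
      define j where "j = (LEAST j. Q j)"
      have Qj: "Q j" unfolding j_def by (rule LeastI[of Q j0]) (use j0 Q_def in auto)
      have "\<forall>t. m < t \<and> t < j \<longrightarrow> ws!t \<noteq> c"
      proof (intro allI impI)
        fix t assume t: "m < t \<and> t < j"
        have "\<not> Q t" using t unfolding j_def by (intro not_less_Least) auto
        then show "ws!t \<noteq> c" using t Qj unfolding Q_def by auto
      qed
      then have "PS j" using Qj cBef unfolding PS_def Q_def by auto
      then show False using False by auto
    qed
    have noB: "\<forall>j. m < j \<and> j < N \<longrightarrow> ws!j \<notin> Bef"
      using False noc unfolding PS_def by (metis less_trans)
    define L where "L = {R!i | i. m < i \<and> i < Suc N}"
    have clos: "\<And>i. Suc i < Suc N \<Longrightarrow> R!i \<in> L \<Longrightarrow> R!Suc i \<in> L"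
    proof -
      fix i assume i: "Suc i < Suc N" "R!i \<in> L"
      show "R!Suc i \<in> L"
      proof (cases "m < i")
        case True then show ?thesis using i unfolding L_def by auto
      next
        case False
        then have im: "i \<le> m" by simp
        obtain i' where i': "m < i'" "i' < Suc N" "R!i = R!i'" using i(2) unfolding L_def by auto
        have Ri: "R!i = Some (ws!i)" using RS im mN by simp
        have "i' \<noteq> N" using i' Ri RN by auto
        then have "i' < N" using i' by simp
        then have "ws!i' = ws!i" using i' Ri RS by simp
        moreover have "ws!i \<in> Bef" unfolding Bef_def using im by auto
        ultimately show ?thesis using noB \<open>i' < N\<close> i' by auto
      qed
    qed
    have pm: "p = m"
    proof (rule ccontr)
      assume "p \<noteq> m"
      have "p \<le> m"
      proof (rule ccontr)
        assume "\<not> p \<le> m"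
        then have "m < p" by simp
        then show False using noc pN wp by blast
      qed
      then have "p < m" using \<open>p \<noteq> m\<close> by simp
      from before[OF this wp] have "R!Suc p = Some dd" using RS by simp
      then show False using p(3) h1 R1 by simp
    qed
    have inL: "\<And>i. Suc i < length R' \<Longrightarrow> R'!Suc i \<in> L"
    proof -
      fix i show "Suc i < length R' \<Longrightarrow> R'!Suc i \<in> L"
      proof (induction i)
        case 0
        have "R'!1 = R!Suc m" using p(3) pm by simp
        moreover have "Suc m < Suc N" using mN by simp
        ultimately show ?case unfolding L_def by auto
      next
        case (Suc i)
        then have ih: "R'!Suc i \<in> L" by simp
        have "bigram R' (R'!Suc i) (R'!Suc (Suc i)) > 0" unfolding bigram_pos
          using Suc.prems by blast
        then have "bigram R (R'!Suc i) (R'!Suc (Suc i)) > 0" using bg by simp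
        then obtain r where r: "Suc r < Suc N" "R!r = R'!Suc i" "R!Suc r = R'!Suc (Suc i)"
          unfolding bigram_pos lR by auto
        show ?case using clos[OF r(1)] r ih by simp
      qed
    qed
    have "bigram R (Some c) (Some dd) > 0" unfolding bigram_pos lR
      using RS[OF N0] R1 c_def N2 by (intro exI[of _ 0]) auto
    then have "bigram R' (Some c) (Some dd) > 0" using bg by simp
    then obtain r where r: "Suc r < length R'" "R'!r = Some c" "R'!Suc r = Some dd"
      unfolding bigram_pos by auto
    show ?thesis
    proof (cases r)
      case 0
      then show ?thesis using r h1 R1 by simp
    next
      case (Suc r')
      then have "Some c \<in> L" using inL[of r'] r by simp
      then obtain i' where i': "m < i'" "i' < Suc N" "R!i' = Some c" unfolding L_def by auto
      have "i' \<noteq> N" using i' RN by auto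
      then have "i' < N" using i' by simp
      then have "ws!i' = c" using i' RS by simp
      then show ?thesis using noc i' \<open>i' < N\<close> by auto
    qed
  qed
qed


lemma delim_len: "length (delim w) = length w + 2"
  unfolding delim_def by simp

lemma delim_nth: "i < length w + 2 \<Longrightarrow>
  delim w ! i = (if i = 0 \<or> i = length w + 1 then None else Some (w!(i - 1)))"
  unfolding delim_def by (cases i) (auto simp: nth_append)

lemma lemma4:
  shows "(UNIV :: ('a::finite) list set) - L_UNIQ \<subseteq> L_OBST"
proof
  fix w :: "'a list"
  assume "w \<in> UNIV - L_UNIQ"
  then obtain u :: "'a list" where bu: "bigram (delim u) = bigram (delim w)"
    and ne: "delim u \<noteq> delim w" unfolding L_UNIQ_def by auto
  define z where "z = delim w"
  define z' where "z' = delim u"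
  have lz: "length z = length w + 2" unfolding z_def by (rule delim_len)
  have lz': "length z' = length u + 2" unfolding z'_def by (rule delim_len)
  have nz: "\<And>i. i < length w + 2 \<Longrightarrow> z!i = (if i = 0 \<or> i = length w + 1 then None else Some (w!(i - 1)))"
    unfolding z_def by (rule delim_nth)
  have nz': "\<And>i. i < length u + 2 \<Longrightarrow> z'!i = (if i = 0 \<or> i = length u + 1 then None else Some (u!(i - 1)))"
    unfolding z'_def by (rule delim_nth)
  define D where "D = (\<lambda>j. j < length z \<and> j < length z' \<and> z!j \<noteq> z'!j)"
  have "\<exists>j. D j"
  proof (rule ccontr)
    assume nD: "\<not> (\<exists>j. D j)"
    show False
    proof (cases "length w = length u")
      case True
      have "z = z'" using nD True lz lz' unfolding D_def by (intro nth_equalityI) auto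
      then show False using ne z_def z'_def by simp
    next
      case False
      show False
      proof (cases "length w < length u")
        case True
        have "z!(length w + 1) = None" using nz[of "length w + 1"] by simp
        moreover have "z'!(length w + 1) = Some (u!(length w))" using nz'[of "length w + 1"] True by simp
        ultimately show False using nD True lz lz' unfolding D_def by auto
      next
        case False
        then have lt: "length u < length w" using \<open>length w \<noteq> length u\<close> by simp
        have "z'!(length u + 1) = None" using nz'[of "length u + 1"] by simp
        moreover have "z!(length u + 1) = Some (w!(length u))" using nz[of "length u + 1"] lt by simp
        ultimately show False using nD lt lz lz' unfolding D_def by auto
      qed
    qed
  qed
  then obtain j1 where "D j1" by auto
  define j0 where "j0 = (LEAST j. D j)"
  have Dj0: "D j0" unfolding j0_def by (rule LeastI[of D j1, OF \<open>D j1\<close>])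
  have eqb: "\<And>j. j < j0 \<Longrightarrow> z!j = z'!j"
  proof -
    fix j assume j: "j < j0"
    have "\<not> D j" using j unfolding j0_def by (rule not_less_Least)
    then show "z!j = z'!j" using j Dj0 unfolding D_def by auto
  qed
  have j00: "j0 \<noteq> 0"
  proof
    assume "j0 = 0"
    then show False using Dj0 nz[of 0] nz'[of 0] unfolding D_def by simp
  qed
  then obtain k where k: "j0 = Suc k" by (cases j0) auto
  have k0: "k \<noteq> 0"
  proof
    assume "k = 0"
    then have d1: "z!1 \<noteq> z'!1" and l1: "1 < length z" "1 < length z'" using Dj0 k unfolding D_def by auto
    have "bigram z None (z!1) > 0" unfolding bigram_pos using l1 nz[of 0]
      by (intro exI[of _ 0]) simp
    then have "bigram z' None (z!1) > 0" using bu z_def z'_def by simp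
    then obtain r where r: "Suc r < length z'" "z'!r = None" "z'!Suc r = z!1"
      unfolding bigram_pos by auto
    have "r = 0 \<or> r = length u + 1" using r nz'[of r] lz' by (auto split: if_splits)
    then have "r = 0" using r lz' by auto
    then show False using r d1 by simp
  qed
  have kw: "k \<le> length w" using Dj0 k lz unfolding D_def by simp
  define ws where "ws = drop (k - 1) w"
  have dz: "drop k z = map Some ws @ [None]"
  proof -
    have "drop k z = drop (k - 1) (map Some w @ [None])"
      unfolding z_def delim_def using k0 by (cases k) auto
    then show ?thesis unfolding ws_def using kw k0 by (simp add: drop_map)
  qed
  have wsne: "ws \<noteq> []" unfolding ws_def using kw k0 by simp
  have w_split: "w = take (k - 1) w @ ws" unfolding ws_def by simp
  have lk: "Suc k < length z" "Suc k < length z'" using Dj0 k unfolding D_def by auto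
  have pre: "card {p. p < k \<and> Suc p < length z \<and> z!p = i \<and> z!Suc p = j}
      = card {p. p < k \<and> Suc p < length z' \<and> z'!p = i \<and> z'!Suc p = j}" for i j
  proof -
    have "{p. p < k \<and> Suc p < length z \<and> z!p = i \<and> z!Suc p = j}
      = {p. p < k \<and> Suc p < length z' \<and> z'!p = i \<and> z'!Suc p = j}"
    proof (intro Collect_cong iffI)
      fix p
      assume "p < k \<and> Suc p < length z \<and> z!p = i \<and> z!Suc p = j"
      then show "p < k \<and> Suc p < length z' \<and> z'!p = i \<and> z'!Suc p = j"
        using eqb[of p] eqb[of "Suc p"] k lk by auto
    next
      fix p
      assume "p < k \<and> Suc p < length z' \<and> z'!p = i \<and> z'!Suc p = j"
      then show "p < k \<and> Suc p < length z \<and> z!p = i \<and> z!Suc p = j"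
        using eqb[of p] eqb[of "Suc p"] k lk by auto
    qed
    then show ?thesis by simp
  qed
  have bgd: "bigram (drop k z') = bigram (drop k z)"
  proof (intro ext)
    fix i j
    have "bigram z i j = bigram z' i j" using bu z_def z'_def by simp
    then show "bigram (drop k z') i j = bigram (drop k z) i j"
      using bigram_split[of k z i j] bigram_split[of k z' i j] lk pre[of i j] by simp
  qed
  have h0: "drop k z' ! 0 = Some (ws!0)"
  proof -
    have "drop k z' ! 0 = z'!k" using lk by simp
    also have "\<dots> = z!k" using eqb[of k] k by simp
    also have "\<dots> = drop k z ! 0" using lk by simp
    also have "\<dots> = Some (ws!0)" unfolding dz using wsne by (simp add: nth_append)
    finally show ?thesis .
  qed
  have h1: "drop k z' ! 1 \<noteq> (map Some ws @ [None]) ! 1"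
  proof -
    have "drop k z' ! 1 = z'!Suc k" using lk by simp
    moreover have "drop k z ! 1 = z!Suc k" using lk by simp
    moreover have "z!Suc k \<noteq> z'!Suc k" using Dj0 k unfolding D_def by simp
    ultimately show ?thesis unfolding dz[symmetric] by simp
  qed
  have l2: "2 \<le> length (drop k z')" using lk by simp
  from core[OF wsne bgd[unfolded dz] l2 h0 h1]
  obtain x a b where xab: "a \<noteq> x" "b \<noteq> x" "ws \<in> I_lang x a b" "ws \<in> J_lang x a b" by blast
  have "w \<in> K_lang x a b" unfolding K_lang_def
    using I_pre[OF xab(3), of "take (k - 1) w"] J_pre[OF xab(4), of "take (k - 1) w"] w_split by simp
  then show "w \<in> L_OBST" unfolding L_OBST_def using xab by blast
qed

end
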